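(* Let $H$ be a simple undirected graph on vertex set $[n]$, let $\{u_i\}_{i=1}^n$ and $\{w_j\}_{j=1}^n$ be two orthonormal families in $\mathbb{C}^d$, and let $\rho\in\mathcal{F}_H$ be a bipartite state that is PPT. Let $\{e_i\}$ be the standard basis of $\mathbb{C}^n$. Then: (1) with $K=\sum_{i=1}^n |e_i\rangle\langle u_i\otimes w_i|$, we have $Z_K(\rho)=K\rho K^*\in\mathcal{M}_n^+(H)$; (2) with $K=\sum_{i=1}^n |e_i\rangle\langle u_i\otimes \overline{w_i}|$, we have $Z^\Gamma_K(\rho)=K\rho^\Gamma K^*\in\mathcal{M}_n^+(H)$.
   Context: $\rho^\Gamma$ denotes the partial transpose on the second factor (in the standard basis), and $\overline{w}$ is entrywise complex conjugation; $\rho$ is PPT if $\rho\ge0$ and $\rho^\Gamma\ge 0$. For an $n\times n$ matrix $X$, $G(X)$ is the undirected graph on $[n]$ with edge set $\{\{i,j\}: i\ne j,\ X_{ij}X_{ji}\neq 0\}$ (for nonnegative matrices: both entries positive). $\mathcal{M}_n(H)$ is the set of self-adjoint $n\times n$ matrices $X$ with $G(X)\subseteq H$, and $\mathcal{M}_n^+(H)=\mathcal{M}_n^+\cap\mathcal{M}_n(H)$. Given the families $\{u_i\},\{w_j\}$, for a bipartite PSD $\rho$ define the $n\times n$ nonnegative matrix $D(\rho)_{ij}=\langle u_i\otimes w_j|\rho|u_i\otimes w_j\rangle$, and let $\mathcal{F}_H=\{\rho\in(\mathcal{M}_d\otimes\mathcal{M}_d)^+ : G(D(\rho))\subseteq H\}$.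 *)

theory Defs
  imports "HOL-Analysis.Analysis" "HOL-Library.Complex_Order"
begin

text \<open>Complex matrices with finite index types. The n x n matrices are indexed by 'n
  (so [n] = UNIV :: 'n set), vectors of C^d by 'd, and C^d (x) C^d by 'd::finite \<times> 'd
  (standard product basis).\<close>

definition cinner :: "complex^'a \<Rightarrow> complex^'a \<Rightarrow> complex" where
  "cinner x y = (\<Sum>a\<in>UNIV. cnj (x$a) * y$a)"

definition adj :: "complex^'m^'n \<Rightarrow> complex^'n^'m" where
  "adj A = (\<chi> i j. cnj (A$j$i))"

definition ctrace :: "complex^'n^'n \<Rightarrow> complex" where
  "ctrace A = (\<Sum>i\<in>UNIV. A$i$i)"

definition psd :: "complex^'n^'n \<Rightarrow> bool" where
  "psd A \<longleftrightarrow> adj A = A \<and> (\<forall>x. 0 \<le> cinner x (A *v x))"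

definition simple_graph :: "('n \<Rightarrow> 'n \<Rightarrow> bool) \<Rightarrow> bool" where
  "simple_graph H \<longleftrightarrow> (\<forall>i j. H i j \<longrightarrow> H j i) \<and> (\<forall>i. \<not> H i i)"

definition graph_sub :: "complex^'n^'n \<Rightarrow> ('n \<Rightarrow> 'n \<Rightarrow> bool) \<Rightarrow> bool" where
  "graph_sub X H \<longleftrightarrow> (\<forall>i j. i \<noteq> j \<and> X$i$j * X$j$i \<noteq> 0 \<longrightarrow> H i j)"

definition Mplus :: "('n \<Rightarrow> 'n \<Rightarrow> bool) \<Rightarrow> (complex^'n^'n) set" where
  "Mplus H = {X. psd X \<and> graph_sub X H}"

definition tensor :: "complex^'d \<Rightarrow> complex^'d \<Rightarrow> complex^('d::finite \<times> 'd)" where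
  "tensor u w = (\<chi> p. u$(fst p) * w$(snd p))"

definition cvec_cnj :: "complex^'d \<Rightarrow> complex^'d" where
  "cvec_cnj w = (\<chi> a. cnj (w$a))"

definition ptrans :: "complex^('d::finite \<times> 'd)^('d \<times> 'd) \<Rightarrow> complex^('d::finite \<times> 'd)^('d \<times> 'd)" where
  "ptrans \<rho> = (\<chi> p q. \<rho>$(fst p, snd q)$(fst q, snd p))"

definition PPT :: "complex^('d::finite \<times> 'd)^('d \<times> 'd) \<Rightarrow> bool" where
  "PPT \<rho> \<longleftrightarrow> psd \<rho> \<and> psd (ptrans \<rho>)"

definition orthonormal_family :: "('n \<Rightarrow> complex^'d) \<Rightarrow> bool" where
  "orthonormal_family u \<longleftrightarrow> (\<forall>i j. cinner (u i) (u j) = (if i = j then 1 else 0))"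

definition Dmat :: "('n \<Rightarrow> complex^'d) \<Rightarrow> ('n \<Rightarrow> complex^'d) \<Rightarrow> complex^('d::finite \<times> 'd)^('d \<times> 'd) \<Rightarrow> complex^'n^'n" where
  "Dmat u w \<rho> = (\<chi> i j. cinner (tensor (u i) (w j)) (\<rho> *v tensor (u i) (w j)))"

definition FH :: "('n::finite \<Rightarrow> 'n \<Rightarrow> bool) \<Rightarrow> ('n \<Rightarrow> complex^'d) \<Rightarrow> ('n \<Rightarrow> complex^'d) \<Rightarrow> (complex^('d::finite \<times> 'd)^('d \<times> 'd)) set" where
  "FH H u w = {\<rho>. psd \<rho> \<and> graph_sub (Dmat u w \<rho>) H}"

text \<open>K = \<Sum>_i |e_i><v_i| : rows are the bras <v_i|.\<close>
definition Kop :: "('n \<Rightarrow> complex^'a) \<Rightarrow> complex^'a^'n" where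
  "Kop v = (\<chi> i a. cnj (v i $ a))"

end

theory Submission
  imports Defs
begin

lemma herm_cnj:
  assumes "adj A = A"
  shows "cnj (cinner x (A *v y)) = cinner y (A *v x)"
proof -
  have e: "\<And>a b. cnj (A$a$b) = A$b$a"
    using assms by (metis adj_def vec_lambda_beta)
  have "cnj (cinner x (A *v y)) = (\<Sum>a\<in>UNIV. \<Sum>b\<in>UNIV. x$a * A$b$a * cnj (y$b))"
    by (simp add: cinner_def matrix_vector_mult_def sum_distrib_left e mult.assoc mult.left_commute)
  also have "\<dots> = (\<Sum>b\<in>UNIV. \<Sum>a\<in>UNIV. x$a * A$b$a * cnj (y$b))"
    by (rule sum.swap)
  also have "\<dots> = cinner y (A *v x)"
    by (simp add: cinner_def matrix_vector_mult_def sum_distrib_left mult.commute mult.left_commute)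
  finally show ?thesis .
qed

lemma cinner_adj:
  "cinner x (M *v y) = cinner (adj M *v x) y"
proof -
  have "cinner x (M *v y) = (\<Sum>a\<in>UNIV. \<Sum>b\<in>UNIV. cnj (x$a) * M$a$b * y$b)"
    by (simp add: cinner_def matrix_vector_mult_def sum_distrib_left mult.assoc)
  also have "\<dots> = (\<Sum>b\<in>UNIV. \<Sum>a\<in>UNIV. cnj (x$a) * M$a$b * y$b)"
    by (rule sum.swap)
  also have "\<dots> = (\<Sum>b\<in>UNIV. (\<Sum>a\<in>UNIV. cnj (x$a) * M$a$b) * y$b)"
    by (simp add: sum_distrib_right)
  also have "\<dots> = cinner (adj M *v x) y"
    unfolding cinner_def matrix_vector_mult_def adj_def
    by (simp add: mult.commute)
  finally show ?thesis .
qed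

lemma cinner_add_left: "cinner (x + y) z = cinner x z + cinner y z"
  by (simp add: cinner_def algebra_simps sum.distrib)
lemma cinner_add_right: "cinner z (x + y) = cinner z x + cinner z y"
  by (simp add: cinner_def algebra_simps sum.distrib)
lemma cinner_scale_left: "cinner (c *s x) y = cnj c * cinner x y"
  by (simp add: cinner_def algebra_simps sum_distrib_left)
lemma cinner_scale_right: "cinner x (c *s y) = c * cinner x y"
  by (simp add: cinner_def algebra_simps sum_distrib_left)
lemma mv_add: "A *v (x + y) = A *v x + A *v (y::complex^'a)"
  by (simp add: matrix_vector_right_distrib)
lemma mv_scale: "A *v (c *s x) = c *s (A *v (x::complex^'a))"
  by (simp add: vec_eq_iff matrix_vector_mult_def sum_distrib_left algebra_simps)

lemma psd_zero:
  assumes "psd A" and "cinner y (A *v y) = 0"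
  shows "cinner x (A *v y) = 0"
proof (rule ccontr)
  let ?z = "cinner x (A *v y)"
  assume nz: "?z \<noteq> 0"
  have h: "adj A = A" and q: "\<And>v. 0 \<le> cinner v (A *v v)" using assms(1) by (auto simp: psd_def)
  have zz: "cinner y (A *v x) = cnj ?z" using herm_cnj[OF h, of x y] by simp
  define t where "t = (Re (cinner x (A *v x)) + 1) / (2 * (cmod ?z)^2)"
  define c where "c = - complex_of_real t * cnj ?z"
  have "cinner (x + c *s y) (A *v (x + c *s y)) = cinner x (A *v x) + c * ?z + cnj c * cnj ?z"
    using assms(2) zz
    by (simp add: mv_add mv_scale cinner_add_left cinner_add_right cinner_scale_left cinner_scale_right)
  also have "c * ?z = - complex_of_real t * (?z * cnj ?z)"
    by (simp add: c_def mult_ac)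
  also have "cnj c * cnj ?z = - complex_of_real t * (?z * cnj ?z)"
    by (simp add: c_def mult_ac)
  also have "?z * cnj ?z = complex_of_real ((cmod ?z)^2)"
    by (rule complex_norm_square[symmetric])
  finally have "0 \<le> cinner x (A *v x) - 2 * complex_of_real (t * (cmod ?z)^2)"
    using q[of "x + c *s y"] by (simp only: of_real_mult) simp
  moreover have "t * (cmod ?z)^2 = (Re (cinner x (A *v x)) + 1) / 2"
    using nz by (simp add: t_def)
  ultimately show False by (simp add: less_eq_complex_def)
qed

lemma psd_zero2:
  assumes "psd A" and "cinner x (A *v x) = 0"
  shows "cinner x (A *v y) = 0"
proof -
  have h: "adj A = A" using assms(1) by (simp add: psd_def)
  have "cinner y (A *v x) = 0" by (rule psd_zero[OF assms])
  then show ?thesis using herm_cnj[OF h, of y x] by simp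
qed

lemma swap3: "(\<Sum>y\<in>A. \<Sum>x\<in>B. \<Sum>z\<in>C. f y x z) = (\<Sum>z\<in>C. \<Sum>x\<in>B. \<Sum>y\<in>A. f y x z)"
proof -
  have "(\<Sum>y\<in>A. \<Sum>x\<in>B. \<Sum>z\<in>C. f y x z) = (\<Sum>y\<in>A. \<Sum>z\<in>C. \<Sum>x\<in>B. f y x z)"
    by (rule sum.cong[OF refl], rule sum.swap)
  also have "\<dots> = (\<Sum>z\<in>C. \<Sum>y\<in>A. \<Sum>x\<in>B. f y x z)" by (rule sum.swap)
  also have "\<dots> = (\<Sum>z\<in>C. \<Sum>x\<in>B. \<Sum>y\<in>A. f y x z)"
    by (rule sum.cong[OF refl], rule sum.swap)
  finally show ?thesis .
qed

lemma ptrans_id: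
  "cinner (tensor a b) (ptrans \<rho> *v tensor c d) = cinner (tensor a (cvec_cnj d)) (\<rho> *v tensor c (cvec_cnj b))"
proof -
  have "cinner (tensor a b) (ptrans \<rho> *v tensor c d) =
     (\<Sum>p\<in>UNIV. \<Sum>q\<in>UNIV. cnj (a$fst p) * cnj (b$snd p) * \<rho>$(fst p, snd q)$(fst q, snd p) * (c$fst q * d$snd q))"
    by (simp add: cinner_def matrix_vector_mult_def tensor_def ptrans_def sum_distrib_left mult.assoc)
  also have "\<dots> = (\<Sum>(x,y)\<in>UNIV. \<Sum>(x',y')\<in>UNIV. cnj (a$x) * cnj (b$y) * \<rho>$(x, y')$(x', y) * (c$x' * d$y'))"
    by (simp add: split_beta)
  also have "\<dots> = (\<Sum>x\<in>UNIV. \<Sum>y\<in>UNIV. \<Sum>x'\<in>UNIV. \<Sum>y'\<in>UNIV. cnj (a$x) * cnj (b$y) * \<rho>$(x, y')$(x', y) * (c$x' * d$y'))"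
    by (simp add: UNIV_Times_UNIV[symmetric] sum.cartesian_product[symmetric] del: UNIV_Times_UNIV)
  also have "\<dots> = (\<Sum>x\<in>UNIV. \<Sum>y'\<in>UNIV. \<Sum>x'\<in>UNIV. \<Sum>y\<in>UNIV. cnj (a$x) * cnj (b$y) * \<rho>$(x, y')$(x', y) * (c$x' * d$y'))"
    by (rule sum.cong[OF refl], rule swap3)
  also have "\<dots> = (\<Sum>(x,y')\<in>UNIV. \<Sum>(x',y)\<in>UNIV. cnj (a$x) * cnj (b$y) * \<rho>$(x, y')$(x', y) * (c$x' * d$y'))"
    by (simp add: UNIV_Times_UNIV[symmetric] sum.cartesian_product[symmetric] del: UNIV_Times_UNIV)
  also have "\<dots> = cinner (tensor a (cvec_cnj d)) (\<rho> *v tensor c (cvec_cnj b))"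
    by (simp add: cinner_def matrix_vector_mult_def tensor_def cvec_cnj_def sum_distrib_left split_beta mult.commute mult.left_commute)
  finally show ?thesis .
qed

lemma cnj_cnj_vec[simp]: "cvec_cnj (cvec_cnj w) = w"
  by (simp add: cvec_cnj_def vec_eq_iff)

lemma Kop_entry:
  "(Kop v ** A ** adj (Kop v))$i$j = cinner (v i) (A *v v j)"
proof -
  have "(Kop v ** A ** adj (Kop v))$i$j = (\<Sum>k\<in>UNIV. (\<Sum>a\<in>UNIV. cnj (v i $ a) * A$a$k) * v j $ k)"
    by (simp add: matrix_matrix_mult_def Kop_def adj_def)
  also have "\<dots> = (\<Sum>k\<in>UNIV. \<Sum>a\<in>UNIV. cnj (v i $ a) * A$a$k * v j $ k)"
    by (simp add: sum_distrib_right)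
  also have "\<dots> = (\<Sum>a\<in>UNIV. \<Sum>k\<in>UNIV. cnj (v i $ a) * A$a$k * v j $ k)"
    by (rule sum.swap)
  also have "\<dots> = cinner (v i) (A *v v j)"
    by (simp add: cinner_def matrix_vector_mult_def sum_distrib_left mult.assoc)
  finally show ?thesis .
qed

lemma Kop_self: "Kop (\<lambda>i. \<chi> a. cnj (K$i$a)) = K"
  by (simp add: Kop_def vec_eq_iff)

lemma psd_cong:
  assumes "psd A"
  shows "psd (K ** A ** adj K)"
proof -
  have h: "adj A = A" and q: "\<And>v. 0 \<le> cinner v (A *v v)" using assms by (auto simp: psd_def)
  have "adj (K ** A ** adj K) = K ** A ** adj K"
  proof -
    have "adj (K ** A ** adj K) $ i $ j = (K ** A ** adj K) $ i $ j" for i j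
      using Kop_entry[of "\<lambda>i. \<chi> a. cnj (K$i$a)" A] herm_cnj[OF h]
      by (simp add: Kop_self adj_def)
    then show ?thesis by (simp add: vec_eq_iff)
  qed
  moreover have "0 \<le> cinner x ((K ** A ** adj K) *v x)" for x
  proof -
    have "cinner x ((K ** A ** adj K) *v x) = cinner x (K *v (A *v (adj K *v x)))"
      by (simp add: matrix_vector_mul_assoc matrix_mul_assoc)
    also have "\<dots> = cinner (adj K *v x) (A *v (adj K *v x))"
      by (rule cinner_adj)
    finally show ?thesis using q by simp
  qed
  ultimately show ?thesis by (simp add: psd_def)
qed

theorem mainTheorem4:
  fixes H :: "'n::finite \<Rightarrow> 'n \<Rightarrow> bool"
    and u w :: "'n \<Rightarrow> complex^'d::finite"
    and \<rho> :: "complex^('d \<times> 'd)^('d \<times> 'd)"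
  assumes "simple_graph H"
    and "orthonormal_family u" and "orthonormal_family w"
    and "\<rho> \<in> FH H u w" and "ctrace \<rho> = 1" and "PPT \<rho>"
  shows "(let K = Kop (\<lambda>i. tensor (u i) (w i)) in K ** \<rho> ** adj K) \<in> Mplus H
       \<and> (let K = Kop (\<lambda>i. tensor (u i) (cvec_cnj (w i))) in K ** ptrans \<rho> ** adj K) \<in> Mplus H"
proof -
  have p1: "psd \<rho>" and p2: "psd (ptrans \<rho>)" using assms(6) by (auto simp: PPT_def)
  have gD: "graph_sub (Dmat u w \<rho>) H" using assms(4) by (simp add: FH_def)
  define D where "D i j = cinner (tensor (u i) (w j)) (\<rho> *v tensor (u i) (w j))" for i j
  have DH: "H i j" if "i \<noteq> j" "D i j \<noteq> 0" "D j i \<noteq> 0" for i j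
    using gD that by (simp add: graph_sub_def Dmat_def D_def)
  have D2: "D i j = cinner (tensor (u i) (cvec_cnj (w j))) (ptrans \<rho> *v tensor (u i) (cvec_cnj (w j)))" for i j
    using ptrans_id[of "u i" "cvec_cnj (w j)" \<rho> "u i" "cvec_cnj (w j)"] by (simp add: D_def)
  have A: "(let K = Kop (\<lambda>i. tensor (u i) (w i)) in K ** \<rho> ** adj K) \<in> Mplus H"
  proof -
    define X where "X = Kop (\<lambda>i. tensor (u i) (w i)) ** \<rho> ** adj (Kop (\<lambda>i. tensor (u i) (w i)))"
    have Xe: "X$i$j = cinner (tensor (u i) (cvec_cnj (w j))) (ptrans \<rho> *v tensor (u j) (cvec_cnj (w i)))" for i j
      using ptrans_id[of "u i" "cvec_cnj (w j)" \<rho> "u j" "cvec_cnj (w i)"] by (simp add: X_def Kop_entry)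
    have "graph_sub X H"
      unfolding graph_sub_def
    proof (intro allI impI)
      fix i j assume a: "i \<noteq> j \<and> X$i$j * X$j$i \<noteq> 0"
      then have nz: "X$i$j \<noteq> 0" by auto
      have "D i j \<noteq> 0" using nz psd_zero2[OF p2, of "tensor (u i) (cvec_cnj (w j))" "tensor (u j) (cvec_cnj (w i))"] by (auto simp: Xe D2)
      moreover have "D j i \<noteq> 0" using nz psd_zero[OF p2, of "tensor (u j) (cvec_cnj (w i))" "tensor (u i) (cvec_cnj (w j))"] by (auto simp: Xe D2)
      ultimately show "H i j" using a DH by blast
    qed
    moreover have "psd X" unfolding X_def by (rule psd_cong[OF p1])
    ultimately show ?thesis by (simp add: Mplus_def X_def Let_def)
  qed
  have B: "(let K = Kop (\<lambda>i. tensor (u i) (cvec_cnj (w i))) in K ** ptrans \<rho> ** adj K) \<in> Mplus H"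
  proof -
    define X where "X = Kop (\<lambda>i. tensor (u i) (cvec_cnj (w i))) ** ptrans \<rho> ** adj (Kop (\<lambda>i. tensor (u i) (cvec_cnj (w i))))"
    have Xe: "X$i$j = cinner (tensor (u i) (w j)) (\<rho> *v tensor (u j) (w i))" for i j
      using ptrans_id[of "u i" "cvec_cnj (w i)" \<rho> "u j" "cvec_cnj (w j)"] by (simp add: X_def Kop_entry)
    have "graph_sub X H"
      unfolding graph_sub_def
    proof (intro allI impI)
      fix i j assume a: "i \<noteq> j \<and> X$i$j * X$j$i \<noteq> 0"
      then have nz: "X$i$j \<noteq> 0" by auto
      have "D i j \<noteq> 0" using nz psd_zero2[OF p1, of "tensor (u i) (w j)" "tensor (u j) (w i)"] by (auto simp: Xe D_def)
      moreover have "D j i \<noteq> 0" using nz psd_zero[OF p1, of "tensor (u j) (w i)" "tensor (u i) (w j)"] by (auto simp: Xe D_def)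
      ultimately show "H i j" using a DH by blast
    qed
    moreover have "psd X" unfolding X_def by (rule psd_cong[OF p2])
    ultimately show ?thesis by (simp add: Mplus_def X_def Let_def)
  qed
  show ?thesis using A B by blast
qed

end
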